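(* Let $k$ be a field of characteristic $p>0$, $m,n\ge1$, and let $G=\ker(F^n:W_m\to W_m)$, with Hopf algebra $R=k[x_0,\dots,x_{m-1}]/(x_0^{p^n},\dots,x_{m-1}^{p^n})$. For $0\le i\le m$ let $G_i\subseteq G$ be the closed subgroup scheme defined by the ideal $(x_0,\dots,x_{m-i-1})$ (so $G_0=0$, $G_m=G$; $G_i$ is the image of $\ker(F^n:W_i\to W_i)$ under $V^{m-i}$). Let $M$ be a finite-dimensional $R$-comodule with comodule map $c_M$, let $1\le i\le m$, and let $v_{i-1}\in M^{G_{i-1}}\setminus\{0\}$. Let $R_i\subseteq R$ be the subalgebra generated by $x_0,\dots,x_{m-i}$. Then: (1) $c_M(v_{i-1})\in M\otimes R_i$; (2) expand $c_M(v_{i-1})$ in the monomial basis of $R_i$ and let $v_i\otimes x_{m-i}^j$ be the nonzero term whose monomial involves only $x_{m-i}$ (including the constant monomial $x_{m-i}^0$) with $j$ maximal. Then $v_i\in M^{G_i}\setminus\{0\}$.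
   Context: $W_m$ denotes truncated Witt vectors of length $m$ over $k$, $F$ the relative Frobenius $(a_\nu)\mapsto(a_\nu^p)$, $V$ the Verschiebung $(a_0,\dots,a_{m-1})\mapsto(0,a_0,\dots,a_{m-2})$. The comultiplication of $R$ is given by Witt vector addition. An $R$-comodule is a $k$-vector space $M$ with $c_M:M\to M\otimes_kR$ satisfying coassociativity and the counit axiom (equivalently a representation of $G$); for a closed subgroup $H\subseteq G$ with Hopf algebra $R/I$, $M^H=\{w\in M:(\mathrm{id}\otimes\mathrm{pr})c_M(w)=w\otimes1\in M\otimes R/I\}$. *)

theory Defs
  imports Complex_Main "HOL-Computational_Algebra.Primes" "HOL-Library.Poly_Mapping"
begin

text \<open>A polynomial in the variables indexed by nat with coefficients in 'a is a
finitely supported map from monomials (exponent vectors nat =>0 nat) to 'a.\<close>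

type_synonym 'a mpoly = "(nat \<Rightarrow>\<^sub>0 nat) \<Rightarrow>\<^sub>0 'a"

definition mp_var :: "nat \<Rightarrow> 'a::comm_ring_1 mpoly" where
  "mp_var i = Poly_Mapping.single (Poly_Mapping.single i 1) 1"

text \<open>Witt addition polynomials S_nu(X,Y) over the integers; the variable X_i is
encoded as variable number 2i and Y_i as variable number 2i+1.\<close>

definition witt_X :: "nat \<Rightarrow> int mpoly" where "witt_X i = mp_var (2 * i)"
definition witt_Y :: "nat \<Rightarrow> int mpoly" where "witt_Y i = mp_var (2 * i + 1)"

definition mp_cdiv :: "int \<Rightarrow> int mpoly \<Rightarrow> int mpoly" where
  "mp_cdiv d P = Poly_Mapping.map (\<lambda>c. c div d) P"

text \<open>witt_add_list p nu = [S_0, ..., S_(nu-1)], defined by the recursion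
  sum_(i<=nu) p^i S_i^(p^(nu-i)) = sum_(i<=nu) p^i (X_i^(p^(nu-i)) + Y_i^(p^(nu-i))).\<close>
primrec witt_add_list :: "nat \<Rightarrow> nat \<Rightarrow> int mpoly list" where
  "witt_add_list p 0 = []"
| "witt_add_list p (Suc nu) =
     (let L = witt_add_list p nu in
      L @ [mp_cdiv (int p ^ nu)
             ((\<Sum>i\<le>nu. of_nat (p ^ i) * (witt_X i ^ (p ^ (nu - i)) + witt_Y i ^ (p ^ (nu - i))))
              - (\<Sum>i<nu. of_nat (p ^ i) * (L ! i) ^ (p ^ (nu - i))))])"

definition witt_add :: "nat \<Rightarrow> nat \<Rightarrow> int mpoly" where
  "witt_add p nu = witt_add_list p (Suc nu) ! nu"

definition std_mono :: "nat \<Rightarrow> nat \<Rightarrow> (nat \<Rightarrow>\<^sub>0 nat) \<Rightarrow> bool" where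
  "std_mono m N a \<longleftrightarrow> (\<forall>i. Poly_Mapping.lookup a i \<noteq> 0 \<longrightarrow> i < m) \<and> (\<forall>i. Poly_Mapping.lookup a i < N)"

text \<open>The monomial x^c (x) x^b of R (x) R, encoded in the variables X_i = 2i
(first tensor factor) and Y_i = 2i+1 (second tensor factor).\<close>
definition tensor_mono :: "nat \<Rightarrow> (nat \<Rightarrow>\<^sub>0 nat) \<Rightarrow> (nat \<Rightarrow>\<^sub>0 nat) \<Rightarrow> (nat \<Rightarrow>\<^sub>0 nat)" where
  "tensor_mono m c b =
     (\<Sum>i<m. Poly_Mapping.single (2 * i) (Poly_Mapping.lookup c i) + Poly_Mapping.single (2 * i + 1) (Poly_Mapping.lookup b i))"

text \<open>Comultiplication: Delta(x_nu) = S_nu(x (x) 1, 1 (x) x) (Witt vector addition,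
coefficients reduced into k), extended multiplicatively. delta_coeff p m a mu is the
coefficient of the bi-monomial mu in Delta(x^a). Since the defining ideal of R (x) R is a
monomial ideal, the coefficient at a standard bi-monomial does not depend on whether the
product is reduced before or after multiplying.\<close>
definition delta_coeff :: "nat \<Rightarrow> nat \<Rightarrow> (nat \<Rightarrow>\<^sub>0 nat) \<Rightarrow> (nat \<Rightarrow>\<^sub>0 nat) \<Rightarrow> 'k::field" where
  "delta_coeff p m a mu =
     Poly_Mapping.lookup (\<Prod>nu<m. (Poly_Mapping.map (of_int :: int \<Rightarrow> 'k) (witt_add p nu)) ^ Poly_Mapping.lookup a nu) mu"

text \<open>An element of M (x) R is represented by its coordinates w.r.t. the standard
monomial basis of R: a map from exponent vectors to M vanishing off standard monomials.\<close>
definition is_comodule ::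
  "('k::field \<Rightarrow> 'm::ab_group_add \<Rightarrow> 'm) \<Rightarrow> nat \<Rightarrow> nat \<Rightarrow> nat \<Rightarrow> ('m \<Rightarrow> (nat \<Rightarrow>\<^sub>0 nat) \<Rightarrow> 'm) \<Rightarrow> bool"
where
  "is_comodule scale p n m cM \<longleftrightarrow>
     \<comment> \<open>values lie in M (x) R\<close>
     (\<forall>v a. \<not> std_mono m (p ^ n) a \<longrightarrow> cM v a = 0) \<and>
     \<comment> \<open>k-linearity\<close>
     (\<forall>u v a. cM (u + v) a = cM u a + cM v a) \<and>
     (\<forall>c v a. cM (scale c v) a = scale c (cM v a)) \<and>
     \<comment> \<open>counit axiom (id (x) eps) cM = id, eps(x_i) = 0\<close>
     (\<forall>v. cM v 0 = v) \<and>
     \<comment> \<open>coassociativity (cM (x) id) cM = (id (x) Delta) cM, compared at x^c (x) x^b\<close>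
     (\<forall>v b c. std_mono m (p ^ n) b \<longrightarrow> std_mono m (p ^ n) c \<longrightarrow>
        cM (cM v b) c =
          (\<Sum>a\<in>{a. std_mono m (p ^ n) a}. scale (delta_coeff p m a (tensor_mono m c b)) (cM v a)))"

text \<open>Invariants under G_i, the closed subgroup defined by the ideal
I = (x_0, ..., x_(m-i-1)). The projection R -> R/I kills exactly the standard
monomials involving some x_j with j < m-i, and maps the others to a basis of R/I.
So (id (x) pr) cM w = w (x) 1 means: for every standard monomial a avoiding
x_0..x_(m-i-1), the coefficient cM w a equals w if a = 1 and 0 otherwise.\<close>
definition invariant_G ::
  "nat \<Rightarrow> nat \<Rightarrow> nat \<Rightarrow> ('m::zero \<Rightarrow> (nat \<Rightarrow>\<^sub>0 nat) \<Rightarrow> 'm) \<Rightarrow> nat \<Rightarrow> 'm \<Rightarrow> bool" where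
  "invariant_G p n m cM i w \<longleftrightarrow>
     (\<forall>a. std_mono m (p ^ n) a \<longrightarrow> (\<forall>j < m - i. Poly_Mapping.lookup a j = 0) \<longrightarrow>
          cM w a = (if a = 0 then w else 0))"

definition in_tensor_R_sub :: "nat \<Rightarrow> ((nat \<Rightarrow>\<^sub>0 nat) \<Rightarrow> 'm::zero) \<Rightarrow> nat \<Rightarrow> bool" where
  "in_tensor_R_sub m f i \<longleftrightarrow> (\<forall>a. (\<exists>j. m - i < j \<and> Poly_Mapping.lookup a j \<noteq> 0) \<longrightarrow> f a = 0)"

end

theory Submission
  imports Defs "HOL-Library.FuncSet"
begin


lemma witt_list_len: "length (witt_add_list p nu) = nu"
  by (induct nu) (simp_all add: Let_def)

lemma witt_list_nth: "i < nu \<Longrightarrow> witt_add_list p nu ! i = witt_add p i"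
proof (induct nu)
  case 0 then show ?case by simp
next
  case (Suc nu)
  show ?case
  proof (cases "i < nu")
    case True then show ?thesis using Suc by (simp add: Let_def nth_append witt_list_len)
  next
    case False then have "i = nu" using Suc by simp
    then show ?thesis by (simp add: witt_add_def)
  qed
qed

lemma witt_add_rec: "witt_add p nu = mp_cdiv (int p ^ nu)
  ((\<Sum>i\<le>nu. of_nat (p ^ i) * (witt_X i ^ (p ^ (nu - i)) + witt_Y i ^ (p ^ (nu - i))))
   - (\<Sum>i<nu. of_nat (p ^ i) * (witt_add p i) ^ (p ^ (nu - i))))"
proof -
  have "(\<Sum>i<nu. of_nat (p ^ i) * (witt_add_list p nu ! i) ^ (p ^ (nu - i)) :: int mpoly)
      = (\<Sum>i<nu. of_nat (p ^ i) * (witt_add p i) ^ (p ^ (nu - i)))"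
    by (rule sum.cong) (simp_all add: witt_list_nth)
  then show ?thesis
    by (simp add: witt_add_def Let_def nth_append witt_list_len)
qed

definition restr :: "nat set \<Rightarrow> 'a::comm_ring_1 mpoly \<Rightarrow> 'a mpoly" where
  "restr K P = Abs_poly_mapping (\<lambda>mu::nat \<Rightarrow>\<^sub>0 nat. if (\<forall>x\<in>K. Poly_Mapping.lookup mu x = 0) then Poly_Mapping.lookup P mu else 0)"

lemma lookup_restr: "Poly_Mapping.lookup (restr K P) (mu::nat \<Rightarrow>\<^sub>0 nat) = (if (\<forall>x\<in>K. Poly_Mapping.lookup mu x = 0) then Poly_Mapping.lookup P mu else 0)"
proof -
  have "finite {mu::nat \<Rightarrow>\<^sub>0 nat. (if (\<forall>x\<in>K. Poly_Mapping.lookup mu x = 0) then Poly_Mapping.lookup P mu else 0) \<noteq> 0}"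
    by (rule finite_subset[of _ "{mu. Poly_Mapping.lookup P mu \<noteq> 0}"]) auto
  then show ?thesis unfolding restr_def by simp
qed

lemma restr_add: "restr K (P + Q) = restr K P + restr K Q"
  by (rule poly_mapping_eqI) (simp add: lookup_restr lookup_add)

lemma restr_minus: "restr K (P - Q) = restr K P - restr K Q"
  by (rule poly_mapping_eqI) (simp add: lookup_restr lookup_minus)

lemma restr_zero: "restr K 0 = 0"
  by (rule poly_mapping_eqI) (simp add: lookup_restr)

lemma restr_sum: "restr K (\<Sum>i\<in>A. f i) = (\<Sum>i\<in>A. restr K (f i))"
proof (rule poly_mapping_eqI)
  fix k :: "nat \<Rightarrow>\<^sub>0 nat"
  show "Poly_Mapping.lookup (restr K (\<Sum>i\<in>A. f i)) k = Poly_Mapping.lookup (\<Sum>i\<in>A. restr K (f i)) k"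
  proof (cases "\<forall>x\<in>K. Poly_Mapping.lookup k x = 0")
    case True then show ?thesis by (simp add: lookup_restr lookup_sum)
  next
    case False
    have z: "Poly_Mapping.lookup (restr K g) k = 0" for g using False by (simp only: lookup_restr if_False)
    show ?thesis by (simp only: z lookup_sum sum.neutral_const)
  qed
qed

lemma restr_one: "restr K 1 = 1"
  by (rule poly_mapping_eqI) (auto simp: lookup_restr lookup_one when_def)

lemma restr_mult: "restr K (P * Q) = restr K P * restr K Q"
proof (rule poly_mapping_eqI)
  fix k :: "nat \<Rightarrow>\<^sub>0 nat"
  define av where "av = (\<lambda>mu::nat \<Rightarrow>\<^sub>0 nat. \<forall>x\<in>K. Poly_Mapping.lookup mu x = 0)"
  have add_av: "av (l + q) \<longleftrightarrow> av l \<and> av q"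
    for l q :: "nat \<Rightarrow>\<^sub>0 nat" by (auto simp: av_def lookup_add)
  have lr: "Poly_Mapping.lookup (restr K R) mu = (if av mu then Poly_Mapping.lookup R mu else 0)" for R mu
    by (simp add: lookup_restr av_def)
  have "(\<lambda>l. Poly_Mapping.lookup (restr K P) l * (\<Sum>q. Poly_Mapping.lookup (restr K Q) q when k = l + q))
      = (\<lambda>l. if av k then Poly_Mapping.lookup P l * (\<Sum>q. Poly_Mapping.lookup Q q when k = l + q) else 0)"
  proof
    fix l
    show "Poly_Mapping.lookup (restr K P) l * (\<Sum>q. Poly_Mapping.lookup (restr K Q) q when k = l + q)
       = (if av k then Poly_Mapping.lookup P l * (\<Sum>q. Poly_Mapping.lookup Q q when k = l + q) else 0)"
    proof (cases "av k")
      case True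
      show ?thesis
      proof (cases "av l")
        case True2: True
        have eq: "(\<lambda>q. Poly_Mapping.lookup (restr K Q) q when k = l + q) = (\<lambda>q. Poly_Mapping.lookup Q q when k = l + q)"
          using True by (intro ext) (auto simp: lr when_def add_av)
        show ?thesis unfolding eq using True True2 by (simp add: lr)
      next
        case False
        have eq: "(\<lambda>q. Poly_Mapping.lookup Q q when k = l + q) = (\<lambda>q. 0)"
          using True False by (intro ext) (auto simp: when_def add_av)
        show ?thesis unfolding eq using True False by (simp add: lr)
      qed
    next
      case False
      show ?thesis
      proof (cases "av l")
        case True2: True
        have eq: "(\<lambda>q. Poly_Mapping.lookup (restr K Q) q when k = l + q) = (\<lambda>q. 0)"
          using False True2 by (intro ext) (auto simp: lr when_def add_av)
        show ?thesis unfolding eq using False by simp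
      next
        case False2: False
        then show ?thesis using False by (simp add: lr)
      qed
    qed
  qed
  note E = this
  have "Poly_Mapping.lookup (restr K P * restr K Q) k = (\<Sum>l. Poly_Mapping.lookup (restr K P) l * (\<Sum>q. Poly_Mapping.lookup (restr K Q) q when k = l + q))"
    by (simp only: lookup_mult)
  also have "\<dots> = (\<Sum>l. if av k then Poly_Mapping.lookup P l * (\<Sum>q. Poly_Mapping.lookup Q q when k = l + q) else 0)"
    by (simp only: E)
  also have "\<dots> = (if av k then Poly_Mapping.lookup (P * Q) k else 0)"
    by (cases "av k") (simp_all add: lookup_mult)
  also have "\<dots> = Poly_Mapping.lookup (restr K (P * Q)) k" by (simp add: lr)
  finally show "Poly_Mapping.lookup (restr K (P * Q)) k = Poly_Mapping.lookup (restr K P * restr K Q) k" by simp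
qed

lemma restr_power: "restr K (P ^ e) = restr K P ^ e"
  by (induct e) (simp_all add: restr_one restr_mult)

lemma restr_prod: "restr K (\<Prod>i\<in>A. f i) = (\<Prod>i\<in>A. restr K (f i))"
  by (induct A rule: infinite_finite_induct) (simp_all add: restr_one restr_mult)

lemma restr_of_nat: "restr K (of_nat c) = of_nat c"
  by (rule poly_mapping_eqI) (auto simp: lookup_restr lookup_of_nat when_def)

lemma restr_var: "restr K (mp_var x) = (if x \<in> K then 0 else mp_var x)"
  by (rule poly_mapping_eqI) (auto simp: lookup_restr mp_var_def lookup_single when_def)

lemma lookup_cdiv: "Poly_Mapping.lookup (mp_cdiv d P) mu = Poly_Mapping.lookup P mu div d"
  by (auto simp: mp_cdiv_def map.rep_eq when_def)

lemma restr_cdiv: "restr K (mp_cdiv d P) = mp_cdiv d (restr K P)"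
  by (rule poly_mapping_eqI) (auto simp: lookup_restr lookup_cdiv)

lemma lookup_of_nat_mult: "Poly_Mapping.lookup (of_nat c * P) mu = of_nat c * Poly_Mapping.lookup P mu"
proof -
  have "of_nat c * P = Poly_Mapping.map ((*) (of_nat c)) P"
    by (simp add: mult_map_scale_conv_mult)
  then show ?thesis by (auto simp: map.rep_eq when_def)
qed

lemma cdiv_mult: "c \<noteq> 0 \<Longrightarrow> mp_cdiv (int c) (of_nat c * P) = P"
  by (rule poly_mapping_eqI) (simp add: lookup_cdiv lookup_of_nat_mult)


lemma witt_restr:
  assumes p: "p > 0" and K: "\<forall>k<j. 2*k+1 \<in> K"
  shows "nu \<le> j \<Longrightarrow> restr K (witt_add p nu) = restr K (witt_X nu) + restr K (witt_Y nu)"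
proof (induct nu rule: less_induct)
  case (less nu)
  define rX where "rX i = restr K (witt_X i)" for i
  define rY where "rY i = restr K (witt_Y i)" for i
  have rY0: "rY i = 0" if "i < nu" for i
    using that less.prems K by (simp add: rY_def witt_Y_def restr_var)
  have IH: "restr K (witt_add p i) = rX i" if "i < nu" for i
    using less.hyps[of i] that less.prems rY0[OF that] by (simp add: rX_def rY_def)
  have pos: "0 < p ^ (nu - i)" for i using p by simp
  have A: "restr K (\<Sum>i\<le>nu. of_nat (p ^ i) * (witt_X i ^ (p ^ (nu - i)) + witt_Y i ^ (p ^ (nu - i))))
     = (\<Sum>i<nu. of_nat (p ^ i) * rX i ^ (p ^ (nu - i))) + of_nat (p ^ nu) * (rX nu + rY nu)"
  proof -
    have "restr K (\<Sum>i\<le>nu. of_nat (p ^ i) * (witt_X i ^ (p ^ (nu - i)) + witt_Y i ^ (p ^ (nu - i))))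
      = (\<Sum>i\<le>nu. of_nat (p ^ i) * (rX i ^ (p ^ (nu - i)) + rY i ^ (p ^ (nu - i))))"
      by (simp add: restr_sum restr_mult restr_of_nat restr_add restr_power rX_def rY_def)
    also have "\<dots> = (\<Sum>i<nu. of_nat (p ^ i) * (rX i ^ (p ^ (nu - i)) + rY i ^ (p ^ (nu - i))))
        + of_nat (p ^ nu) * (rX nu + rY nu)"
      by (simp add: lessThan_Suc_atMost[symmetric])
    also have "(\<Sum>i<nu. of_nat (p ^ i) * (rX i ^ (p ^ (nu - i)) + rY i ^ (p ^ (nu - i))))
       = (\<Sum>i<nu. of_nat (p ^ i) * rX i ^ (p ^ (nu - i)))"
      using p by (intro sum.cong) (simp_all add: rY0 pos zero_power)
    finally show ?thesis .
  qed
  have B: "restr K (\<Sum>i<nu. of_nat (p ^ i) * (witt_add p i) ^ (p ^ (nu - i)))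
     = (\<Sum>i<nu. of_nat (p ^ i) * rX i ^ (p ^ (nu - i)))"
    by (simp add: restr_sum restr_mult restr_of_nat restr_power IH)
  have "restr K (witt_add p nu) = mp_cdiv (int (p ^ nu)) (of_nat (p ^ nu) * (rX nu + rY nu))"
    apply (subst witt_add_rec)
    apply (simp only: restr_cdiv restr_minus A B add_diff_cancel_left')
    apply (simp only: of_nat_power)
    done
  also have "\<dots> = rX nu + rY nu" using p by (intro cdiv_mult) simp
  finally show ?case by (simp add: rX_def rY_def)
qed



lemma finite_std: "finite {a. std_mono m N a}"
proof -
  define h where "h = (\<lambda>(g::nat \<Rightarrow> nat) (i::nat). if i < m then g i else 0)"
  have sub: "Poly_Mapping.lookup ` {a. std_mono m N a} \<subseteq> h ` PiE {..<m} (\<lambda>_. {..<N})"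
  proof
    fix f assume "f \<in> Poly_Mapping.lookup ` {a. std_mono m N a}"
    then obtain a where a: "std_mono m N a" and f: "f = Poly_Mapping.lookup a" by auto
    have z: "f i = 0" if "\<not> i < m" for i
    proof -
      have "\<forall>i. Poly_Mapping.lookup a i \<noteq> 0 \<longrightarrow> i < m" using a unfolding std_mono_def by (rule conjunct1)
      then show ?thesis using f that by auto
    qed
    have bnd: "f i < N" for i
    proof -
      have "\<forall>i. Poly_Mapping.lookup a i < N" using a unfolding std_mono_def by (rule conjunct2)
      then show ?thesis using f by auto
    qed
    have "f = h (restrict f {..<m})"
    proof
      fix i show "f i = h (restrict f {..<m}) i" using z[of i] by (simp add: h_def)
    qed
    moreover have "restrict f {..<m} \<in> PiE {..<m} (\<lambda>_. {..<N})"
      using bnd by (auto simp: PiE_iff)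
    ultimately show "f \<in> h ` PiE {..<m} (\<lambda>_. {..<N})" by (rule image_eqI)
  qed
  have "finite (h ` PiE {..<m} (\<lambda>_. {..<N}))"
    by (intro finite_imageI finite_PiE) auto
  then have "finite (Poly_Mapping.lookup ` {a. std_mono m N a})"
    using sub by (rule finite_subset[rotated])
  moreover have "inj_on Poly_Mapping.lookup {a. std_mono m N a}"
    by (rule inj_onI) (rule poly_mapping_eqI, simp)
  ultimately show ?thesis by (rule finite_imageD)
qed

lemma par1 [simp]: "Suc (2 * x) \<noteq> 2 * (k::nat)" by presburger
lemma par2 [simp]: "2 * x \<noteq> Suc (2 * (k::nat))" by presburger

lemma lookup_tm_even: "Poly_Mapping.lookup (tensor_mono m c b) (2*k) = (if k < m then Poly_Mapping.lookup c k else 0)"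
proof -
  have "Poly_Mapping.lookup (tensor_mono m c b) (2*k)
     = (\<Sum>i<m. (if i = k then Poly_Mapping.lookup c i else 0))"
    unfolding tensor_mono_def lookup_sum
    by (intro sum.cong) (auto simp: lookup_add lookup_single when_def)
  then show ?thesis by simp
qed

lemma lookup_tm_odd: "Poly_Mapping.lookup (tensor_mono m c b) (2*k+1) = (if k < m then Poly_Mapping.lookup b k else 0)"
proof -
  have "Poly_Mapping.lookup (tensor_mono m c b) (2*k+1)
     = (\<Sum>i<m. (if i = k then Poly_Mapping.lookup b i else 0))"
    unfolding tensor_mono_def lookup_sum
    by (intro sum.cong) (auto simp: lookup_add lookup_single when_def)
  then show ?thesis by simp
qed

lemma even_odd_cases: obtains k where "(x::nat) = 2*k" | k where "x = 2*k+1"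
  by (metis dvd_mult_div_cancel odd_two_times_div_two_succ)

lemma mp_var_pow: "(mp_var x :: 'a::comm_ring_1 mpoly) ^ e = Poly_Mapping.single (Poly_Mapping.single x e) 1"
  by (induct e) (simp_all add: mp_var_def mult_single single_add[symmetric] add.commute)

lemma prod_var_pow: "finite A \<Longrightarrow> (\<Prod>nu\<in>A. (mp_var (g nu) :: 'a::comm_ring_1 mpoly) ^ e nu)
   = Poly_Mapping.single (\<Sum>nu\<in>A. Poly_Mapping.single (g nu) (e nu)) 1"
  by (induct A rule: finite_induct) (simp_all add: mp_var_pow mult_single)

lemma lookup_sum_single: "Poly_Mapping.lookup (\<Sum>nu\<in>A. Poly_Mapping.single (g nu) (e nu)) x
   = (\<Sum>nu\<in>A. if g nu = x then e nu else 0)"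
  by (simp add: lookup_sum lookup_single when_def)

lemma lookup_map_of_int: "Poly_Mapping.lookup (Poly_Mapping.map (of_int :: int \<Rightarrow> 'a::comm_ring_1) P) mu = of_int (Poly_Mapping.lookup P mu)"
  by (simp add: map.rep_eq when_def)

lemma map_of_int_add: "Poly_Mapping.map (of_int :: int \<Rightarrow> 'a::comm_ring_1) (P + Q) = Poly_Mapping.map of_int P + Poly_Mapping.map of_int Q"
  by (rule poly_mapping_eqI) (simp add: lookup_map_of_int lookup_add)

lemma map_of_int_var: "Poly_Mapping.map (of_int :: int \<Rightarrow> 'a::comm_ring_1) (mp_var x) = mp_var x"
  by (simp add: mp_var_def)

lemma map_of_int_zero: "Poly_Mapping.map (of_int :: int \<Rightarrow> 'a::comm_ring_1) 0 = 0"
  by (rule poly_mapping_eqI) (simp add: lookup_map_of_int)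

lemma restr_map_of_int: "restr K (Poly_Mapping.map (of_int :: int \<Rightarrow> 'a::comm_ring_1) P) = Poly_Mapping.map of_int (restr K P)"
  by (rule poly_mapping_eqI) (simp add: lookup_map_of_int lookup_restr)

lemma factor_restr:
  assumes "p > 0" "\<forall>k<j. 2*k+1 \<in> K" "nu \<le> j"
  shows "restr K (Poly_Mapping.map (of_int :: int \<Rightarrow> 'a::comm_ring_1) (witt_add p nu))
    = (if 2*nu \<in> K then 0 else mp_var (2*nu)) + (if 2*nu+1 \<in> K then 0 else mp_var (2*nu+1))"
  using witt_restr[OF assms(1,2,3)]
  by (simp add: restr_map_of_int map_of_int_add witt_X_def witt_Y_def restr_var map_of_int_var map_of_int_zero)

lemma delta_restr:
  assumes "\<forall>x\<in>K. Poly_Mapping.lookup mu x = 0"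
  shows "(delta_coeff p m a mu :: 'k::field) = Poly_Mapping.lookup
     (\<Prod>nu<m. (restr K (Poly_Mapping.map (of_int :: int \<Rightarrow> 'k) (witt_add p nu))) ^ Poly_Mapping.lookup a nu) mu"
proof -
  have "restr K (\<Prod>nu<m. (Poly_Mapping.map (of_int :: int \<Rightarrow> 'k) (witt_add p nu)) ^ Poly_Mapping.lookup a nu)
     = (\<Prod>nu<m. (restr K (Poly_Mapping.map (of_int :: int \<Rightarrow> 'k) (witt_add p nu))) ^ Poly_Mapping.lookup a nu)"
    by (simp only: restr_prod restr_power)
  have "(delta_coeff p m a mu :: 'k) = Poly_Mapping.lookup (\<Prod>nu<m. (Poly_Mapping.map (of_int :: int \<Rightarrow> 'k) (witt_add p nu)) ^ Poly_Mapping.lookup a nu) mu"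
    by (simp only: delta_coeff_def)
  also have "\<dots> = Poly_Mapping.lookup (restr K (\<Prod>nu<m. (Poly_Mapping.map (of_int :: int \<Rightarrow> 'k) (witt_add p nu)) ^ Poly_Mapping.lookup a nu)) mu"
    by (subst lookup_restr, subst if_P[OF assms], rule refl)
  finally show ?thesis by (simp only: restr_prod restr_power)
qed

lemma lookup_binom:
  "Poly_Mapping.lookup (((mp_var x + mp_var y) :: 'a::comm_ring_1 mpoly) ^ s) mu
    = (\<Sum>k\<le>s. of_nat (s choose k) * (if Poly_Mapping.single x k + Poly_Mapping.single y (s - k) = mu then 1 else 0))"
proof -
  have "(mp_var x + mp_var y :: 'a mpoly) ^ s = (\<Sum>k\<le>s. of_nat (s choose k) * mp_var x ^ k * mp_var y ^ (s - k))"
    by (rule binomial_ring)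
  also have "\<dots> = (\<Sum>k\<le>s. of_nat (s choose k) * Poly_Mapping.single (Poly_Mapping.single x k + Poly_Mapping.single y (s - k)) 1)"
    by (simp only: mp_var_pow mult_single mult.assoc mult_1)
  finally have "Poly_Mapping.lookup ((mp_var x + mp_var y :: 'a mpoly) ^ s) mu
     = (\<Sum>k\<le>s. Poly_Mapping.lookup (of_nat (s choose k) * Poly_Mapping.single (Poly_Mapping.single x k + Poly_Mapping.single y (s - k)) (1::'a)) mu)"
    by (simp only: lookup_sum)
  also have "\<dots> = (\<Sum>k\<le>s. of_nat (s choose k) * (if Poly_Mapping.single x k + Poly_Mapping.single y (s - k) = mu then 1 else 0))"
    by (intro sum.cong refl) (simp only: lookup_of_nat_mult lookup_single when_def)
  finally show ?thesis .
qed



lemma kill_step: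
  fixes scale :: "'k::field \<Rightarrow> 'm::ab_group_add \<Rightarrow> 'm" and cM :: "'m \<Rightarrow> (nat \<Rightarrow>\<^sub>0 nat) \<Rightarrow> 'm"
  assumes comod: "is_comodule scale p n m cM" and vs: "vector_space scale" and p: "p > 0"
    and j: "j < m" and a: "std_mono m (p^n) a" and aj: "Poly_Mapping.lookup a j \<noteq> 0"
    and atop: "\<forall>k>j. Poly_Mapping.lookup a k = 0"
    and H: "\<forall>a'. std_mono m (p^n) a' \<longrightarrow> (\<exists>k>j. Poly_Mapping.lookup a' k \<noteq> 0) \<longrightarrow> cM v a' = 0"
    and inv: "\<forall>b. std_mono m (p^n) b \<longrightarrow> (\<forall>k<j. Poly_Mapping.lookup b k = 0) \<longrightarrow> b \<noteq> 0 \<longrightarrow> cM v b = 0"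
  shows "cM v a = 0"
proof -
  interpret V: vector_space scale by (rule vs)
  have Cadd: "\<And>u w x. cM (u + w) x = cM u x + cM w x" using comod unfolding is_comodule_def by blast
  have Ccoas: "\<And>u b c. std_mono m (p ^ n) b \<Longrightarrow> std_mono m (p ^ n) c \<Longrightarrow>
        cM (cM u b) c = (\<Sum>a\<in>{a. std_mono m (p ^ n) a}. scale (delta_coeff p m a (tensor_mono m c b)) (cM u a))"
    using comod unfolding is_comodule_def by blast
  have cM0: "cM 0 x = 0" for x using Cadd[of 0 0 x] by simp
  define s where "s = Poly_Mapping.lookup a j"
  define b where "b = Poly_Mapping.single j s"
  define c where "c = a - b"
  have lb: "Poly_Mapping.lookup b k = (if k = j then s else 0)" for k
    by (simp add: b_def lookup_single when_def)
  have lc: "Poly_Mapping.lookup c k = (if k = j then 0 else Poly_Mapping.lookup a k)" for k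
    by (simp add: c_def lookup_minus lb s_def)
  have stdb: "std_mono m (p^n) b" using a j p unfolding std_mono_def by (auto simp: lb s_def)
  have stdc: "std_mono m (p^n) c" using a p unfolding std_mono_def by (auto simp: lc)
  have "b \<noteq> 0" using aj lb[of j] by (auto simp: s_def)
  then have "cM v b = 0" using inv stdb lb by auto
  then have "0 = cM (cM v b) c" by (simp add: cM0)
  also have "\<dots> = (\<Sum>a'\<in>{a. std_mono m (p ^ n) a}. scale (delta_coeff p m a' (tensor_mono m c b)) (cM v a'))"
    by (rule Ccoas[OF stdb stdc])
  also have "\<dots> = (\<Sum>a'\<in>{a. std_mono m (p ^ n) a}. if a' = a then cM v a else 0)"
  proof (rule sum.cong[OF refl])
    fix a' assume "a' \<in> {a. std_mono m (p ^ n) a}"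
    then have a': "std_mono m (p^n) a'" by simp
    show "scale (delta_coeff p m a' (tensor_mono m c b)) (cM v a') = (if a' = a then cM v a else 0)"
    proof (cases "\<exists>k>j. Poly_Mapping.lookup a' k \<noteq> 0")
      case True
      then have "a' \<noteq> a" using atop by auto
      moreover have "cM v a' = 0" using H a' True by blast
      ultimately show ?thesis by simp
    next
      case False
      then have a'top: "\<And>k. j < k \<Longrightarrow> Poly_Mapping.lookup a' k = 0" by auto
      define K where "K = {x::nat. (odd x \<and> x \<noteq> 2*j+1) \<or> x = 2*j}"
      define mu where "mu = tensor_mono m c b"
      have Kodd: "\<forall>k<j. 2*k+1 \<in> K" by (auto simp: K_def)
      have avoid: "\<forall>x\<in>K. Poly_Mapping.lookup mu x = 0"
      proof
        fix x assume "x \<in> K"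
        then consider (o) k where "x = 2*k+1" "k \<noteq> j" | (e) "x = 2*j"
        proof -
          assume h1: "\<And>k. x = 2*k+1 \<Longrightarrow> k \<noteq> j \<Longrightarrow> thesis" and h2: "x = 2*j \<Longrightarrow> thesis"
          from \<open>x \<in> K\<close> have "(odd x \<and> x \<noteq> 2*j+1) \<or> x = 2*j" by (simp add: K_def)
          then show thesis
          proof
            assume "odd x \<and> x \<noteq> 2*j+1"
            then obtain k where "x = 2*k+1" by (auto elim: oddE)
            then show thesis using h1 \<open>odd x \<and> x \<noteq> 2*j+1\<close> by blast
          qed (rule h2)
        qed
        then show "Poly_Mapping.lookup mu x = 0"
        proof cases
          case o then show ?thesis using lookup_tm_odd[of m c b k] by (simp add: mu_def lb)
        next
          case e then show ?thesis by (simp add: mu_def lookup_tm_even lc)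
        qed
      qed
      define g where "g nu = (if nu = j then 2*j+1 else 2*nu)" for nu :: nat
      have F: "restr K (Poly_Mapping.map (of_int :: int \<Rightarrow> 'k) (witt_add p nu)) = mp_var (g nu)" if "nu \<le> j" for nu
      proof -
        have e1: "(2*nu \<in> K) = (nu = j)" by (auto simp: K_def)
        have e2: "(Suc (2*nu) \<in> K) = (nu \<noteq> j)" by (auto simp: K_def)
        show ?thesis using factor_restr[OF p Kodd that, where 'a='k] by (simp add: e1 e2 g_def)
      qed
      have "(\<Prod>nu<m. (restr K (Poly_Mapping.map (of_int :: int \<Rightarrow> 'k) (witt_add p nu))) ^ Poly_Mapping.lookup a' nu)
          = (\<Prod>nu<m. (mp_var (g nu) :: 'k mpoly) ^ Poly_Mapping.lookup a' nu)"
      proof (rule prod.cong[OF refl])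
        fix nu assume "nu \<in> {..<m}"
        show "(restr K (Poly_Mapping.map (of_int :: int \<Rightarrow> 'k) (witt_add p nu))) ^ Poly_Mapping.lookup a' nu
            = (mp_var (g nu) :: 'k mpoly) ^ Poly_Mapping.lookup a' nu"
        proof (cases "nu \<le> j")
          case True then show ?thesis by (simp add: F)
        next
          case False then show ?thesis using a'top[of nu] by simp
        qed
      qed
      also have "\<dots> = Poly_Mapping.single (\<Sum>nu<m. Poly_Mapping.single (g nu) (Poly_Mapping.lookup a' nu)) 1"
        by (rule prod_var_pow) simp
      finally have dl: "(delta_coeff p m a' mu :: 'k) = Poly_Mapping.lookup (Poly_Mapping.single (\<Sum>nu<m. Poly_Mapping.single (g nu) (Poly_Mapping.lookup a' nu)) 1) mu"
        using delta_restr[OF avoid, where 'k='k, of p m a'] by (simp only:)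
      define M' where "M' = (\<Sum>nu<m. Poly_Mapping.single (g nu) (Poly_Mapping.lookup a' nu))"
      have lMe: "Poly_Mapping.lookup M' (2*k) = (if k < m \<and> k \<noteq> j then Poly_Mapping.lookup a' k else 0)" for k
      proof -
        have "Poly_Mapping.lookup M' (2*k) = (\<Sum>nu<m. if nu = k then (if k \<noteq> j then Poly_Mapping.lookup a' nu else 0) else 0)"
          unfolding M'_def lookup_sum_single by (intro sum.cong refl) (auto simp: g_def)
        then show ?thesis by simp
      qed
      have lMo: "Poly_Mapping.lookup M' (2*k+1) = (if k = j then Poly_Mapping.lookup a' j else 0)" for k
      proof -
        have "Poly_Mapping.lookup M' (2*k+1) = (\<Sum>nu<m. if nu = j then (if k = j then Poly_Mapping.lookup a' nu else 0) else 0)"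
          unfolding M'_def lookup_sum_single by (intro sum.cong refl) (auto simp: g_def)
        then show ?thesis using j by simp
      qed
      have eqiff: "M' = mu \<longleftrightarrow> a' = a"
      proof
        assume e: "M' = mu"
        show "a' = a"
        proof (rule poly_mapping_eqI)
          fix k show "Poly_Mapping.lookup a' k = Poly_Mapping.lookup a k"
          proof (cases "k < m")
            case False
            have "Poly_Mapping.lookup a k = 0" using a False unfolding std_mono_def by blast
            moreover have "Poly_Mapping.lookup a' k = 0" using a' False unfolding std_mono_def by blast
            ultimately show ?thesis by simp
          next
            case True
            show ?thesis
            proof (cases "k = j")
              case True then show ?thesis
                using lMo[of j] e j lookup_tm_odd[of m c b j] by (simp add: mu_def lb s_def)
            next
              case False then show ?thesis
                using lMe[of k] e \<open>k < m\<close> by (simp add: mu_def lookup_tm_even lc)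
            qed
          qed
        qed
      next
        assume e: "a' = a"
        show "M' = mu"
        proof (rule poly_mapping_eqI)
          fix x show "Poly_Mapping.lookup M' x = Poly_Mapping.lookup mu x"
          proof (cases x rule: even_odd_cases)
            case (1 k) then show ?thesis by (simp add: lMe mu_def lookup_tm_even lc e)
          next
            case (2 k) then show ?thesis using j lMo[of k] lookup_tm_odd[of m c b k] by (simp add: mu_def lb e s_def)
          qed
        qed
      qed
      have "(delta_coeff p m a' mu :: 'k) = (if a' = a then 1 else 0)"
        using dl eqiff by (simp add: M'_def[symmetric] lookup_single when_def)
      then show ?thesis by (simp add: mu_def)
    qed
  qed
  also have "\<dots> = cM v a" using a by (simp add: finite_std)
  finally show ?thesis by simp
qed


lemma top_step:
  fixes scale :: "'k::field \<Rightarrow> 'm::ab_group_add \<Rightarrow> 'm" and cM :: "'m \<Rightarrow> (nat \<Rightarrow>\<^sub>0 nat) \<Rightarrow> 'm"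
  assumes comod: "is_comodule scale p n m cM" and vs: "vector_space scale" and p: "p > 0"
    and r: "r < m"
    and H1: "\<forall>a'. std_mono m (p^n) a' \<longrightarrow> (\<exists>k>r. Poly_Mapping.lookup a' k \<noteq> 0) \<longrightarrow> cM v a' = 0"
    and maxJ: "\<forall>s>J. cM v (Poly_Mapping.single r s) = 0"
    and c: "std_mono m (p^n) c" and clow: "\<forall>k<r. Poly_Mapping.lookup c k = 0"
  shows "cM (cM v (Poly_Mapping.single r J)) c = (if c = 0 then cM v (Poly_Mapping.single r J) else 0)"
proof -
  interpret V: vector_space scale by (rule vs)
  have C0: "\<And>u a. \<not> std_mono m (p ^ n) a \<Longrightarrow> cM u a = 0" using comod unfolding is_comodule_def by blast
  have Cadd: "\<And>u w x. cM (u + w) x = cM u x + cM w x" using comod unfolding is_comodule_def by blast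
  have Ccoas: "\<And>u b c. std_mono m (p ^ n) b \<Longrightarrow> std_mono m (p ^ n) c \<Longrightarrow>
        cM (cM u b) c = (\<Sum>a\<in>{a. std_mono m (p ^ n) a}. scale (delta_coeff p m a (tensor_mono m c b)) (cM u a))"
    using comod unfolding is_comodule_def by blast
  have cM0: "cM 0 x = 0" for x using Cadd[of 0 0 x] by simp
  define b where "b = Poly_Mapping.single r J"
  have lb: "Poly_Mapping.lookup b k = (if k = r then J else 0)" for k
    by (simp add: b_def lookup_single when_def)
  show ?thesis
  proof (cases "std_mono m (p^n) b")
    case False
    then show ?thesis using C0 by (simp add: b_def[symmetric] cM0)
  next
    case stdb: True
    define mu where "mu = tensor_mono m c b"
    have "cM (cM v b) c = (\<Sum>a'\<in>{a. std_mono m (p ^ n) a}. scale (delta_coeff p m a' mu) (cM v a'))"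
      unfolding mu_def by (rule Ccoas[OF stdb c])
    also have "\<dots> = (\<Sum>a'\<in>{a. std_mono m (p ^ n) a}. if a' = b then (if c = 0 then cM v b else 0) else 0)"
    proof (rule sum.cong[OF refl])
      fix a' assume "a' \<in> {a. std_mono m (p ^ n) a}"
      then have a': "std_mono m (p^n) a'" by simp
      show "scale (delta_coeff p m a' mu) (cM v a') = (if a' = b then (if c = 0 then cM v b else 0) else 0)"
      proof (cases "\<exists>k>r. Poly_Mapping.lookup a' k \<noteq> 0")
        case True
        then have "a' \<noteq> b" using lb by auto
        moreover have "cM v a' = 0" using H1 a' True by blast
        ultimately show ?thesis by simp
      next
        case False
        then have a'top: "\<And>k. r < k \<Longrightarrow> Poly_Mapping.lookup a' k = 0" by auto
        define K where "K = {x::nat. (even x \<and> x < 2*r) \<or> (odd x \<and> x \<noteq> 2*r+1)}"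
        have Kodd: "\<forall>k<r. 2*k+1 \<in> K" by (auto simp: K_def)
        have avoid: "\<forall>x\<in>K. Poly_Mapping.lookup mu x = 0"
        proof
          fix x assume xK: "x \<in> K"
          show "Poly_Mapping.lookup mu x = 0"
          proof (cases x rule: even_odd_cases)
            case (1 k)
            then have "k < r" using xK by (auto simp: K_def)
            then show ?thesis using 1 clow by (simp add: mu_def lookup_tm_even)
          next
            case (2 k)
            then have "k \<noteq> r" using xK by (auto simp: K_def)
            then show ?thesis using 2 lookup_tm_odd[of m c b k] by (simp add: mu_def lb)
          qed
        qed
        define X where "X = (mp_var (2*r) :: 'k mpoly)"
        define Y where "Y = (mp_var (2*r+1) :: 'k mpoly)"
        have F: "restr K (Poly_Mapping.map (of_int :: int \<Rightarrow> 'k) (witt_add p nu)) = (if nu = r then X + Y else 0)"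
          if "nu \<le> r" for nu
        proof -
          have e1: "(2*nu \<in> K) = (nu < r)" by (auto simp: K_def)
          have e2: "(Suc (2*nu) \<in> K) = (nu \<noteq> r)" by (auto simp: K_def)
          show ?thesis using factor_restr[OF p Kodd that, where 'a='k] that by (auto simp: e1 e2 X_def Y_def)
        qed
        have dr: "(delta_coeff p m a' mu :: 'k) = Poly_Mapping.lookup
            (\<Prod>nu<m. (restr K (Poly_Mapping.map (of_int :: int \<Rightarrow> 'k) (witt_add p nu))) ^ Poly_Mapping.lookup a' nu) mu"
          by (rule delta_restr[OF avoid])
        show ?thesis
        proof (cases "\<exists>nu<r. Poly_Mapping.lookup a' nu \<noteq> 0")
          case True
          then obtain nu where nu: "nu < r" "Poly_Mapping.lookup a' nu \<noteq> 0" by blast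
          have "(\<Prod>nu<m. (restr K (Poly_Mapping.map (of_int :: int \<Rightarrow> 'k) (witt_add p nu))) ^ Poly_Mapping.lookup a' nu) = 0"
          proof (rule prod_zero)
            show "\<exists>x\<in>{..<m}. restr K (Poly_Mapping.map (of_int :: int \<Rightarrow> 'k) (witt_add p x)) ^ Poly_Mapping.lookup a' x = 0"
              using nu r F[of nu] by (intro bexI[of _ nu]) auto
          qed simp
          note P0 = this
          have "(delta_coeff p m a' mu :: 'k) = 0" by (subst dr, subst P0, rule lookup_zero)
          moreover have "a' \<noteq> b" using nu lb by auto
          ultimately show ?thesis by simp
        next
          case False
          then have a'low: "\<And>k. k < r \<Longrightarrow> Poly_Mapping.lookup a' k = 0" by auto
          define s where "s = Poly_Mapping.lookup a' r"
          have a's: "a' = Poly_Mapping.single r s"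
          proof (rule poly_mapping_eqI)
            fix k show "Poly_Mapping.lookup a' k = Poly_Mapping.lookup (Poly_Mapping.single r s) k"
            proof (cases "k = r")
              case True then show ?thesis by (simp add: s_def lookup_single when_def)
            next
              case False
              then have "k < r \<or> r < k" by linarith
              then show ?thesis using a'low[of k] a'top[of k] False by (auto simp: lookup_single when_def)
            qed
          qed
          have "(\<Prod>nu<m. (restr K (Poly_Mapping.map (of_int :: int \<Rightarrow> 'k) (witt_add p nu))) ^ Poly_Mapping.lookup a' nu)
              = (\<Prod>nu<m. if nu = r then (X + Y) ^ s else 1)"
          proof (rule prod.cong[OF refl])
            fix nu assume "nu \<in> {..<m}"
            show "(restr K (Poly_Mapping.map (of_int :: int \<Rightarrow> 'k) (witt_add p nu))) ^ Poly_Mapping.lookup a' nu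
              = (if nu = r then (X + Y) ^ s else 1)"
            proof (cases "nu = r")
              case True then show ?thesis using F[of nu] by (simp add: s_def)
            next
              case False
              then have "nu < r \<or> r < nu" by linarith
              then have "Poly_Mapping.lookup a' nu = 0" using a'low[of nu] a'top[of nu] by auto
              then show ?thesis using False by simp
            qed
          qed
          also have "\<dots> = (X + Y) ^ s" using r by simp
          finally have ds: "(delta_coeff p m a' mu :: 'k) = Poly_Mapping.lookup ((X + Y) ^ s) mu"
            using dr by simp
          have lmuY: "Poly_Mapping.lookup mu (2*r+1) = J" using r lookup_tm_odd[of m c b r] by (simp add: mu_def lb)
          have keyeq: "s - k = J" if "Poly_Mapping.single (2*r) k + Poly_Mapping.single (2*r+1) (s - k) = mu" for k
          proof -
            have "Poly_Mapping.lookup (Poly_Mapping.single (2*r) k + Poly_Mapping.single (2*r+1) (s - k)) (2*r+1) = s - k"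
              by (simp add: lookup_add lookup_single when_def)
            then show ?thesis using that lmuY by simp
          qed
          have dsum: "(delta_coeff p m a' mu :: 'k) = (\<Sum>k\<le>s. of_nat (s choose k) *
              (if Poly_Mapping.single (2*r) k + Poly_Mapping.single (2*r+1) (s - k) = mu then 1 else 0))"
            using ds lookup_binom[of "2*r" "2*r+1" s mu] by (simp add: X_def Y_def)
          consider (gt) "s > J" | (lt) "s < J" | (eq) "s = J" by linarith
          then show ?thesis
          proof cases
            case gt
            then have "cM v a' = 0" using maxJ a's by simp
            moreover have "a' \<noteq> b" using gt lb[of r] by (auto simp: s_def)
            ultimately show ?thesis by simp
          next
            case lt
            have "(\<Sum>k\<le>s. of_nat (s choose k) *
              (if Poly_Mapping.single (2*r) k + Poly_Mapping.single (2*r+1) (s - k) = mu then 1 else 0)) = (0::'k)"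
            proof (rule sum.neutral, rule ballI)
              fix k assume "k \<in> {..s}"
              show "of_nat (s choose k) *
                (if Poly_Mapping.single (2*r) k + Poly_Mapping.single (2*r+1) (s - k) = mu then 1 else 0) = (0::'k)"
                using keyeq[of k] lt by auto
            qed
            then have "(delta_coeff p m a' mu :: 'k) = 0" using dsum by simp
            moreover have "a' \<noteq> b" using lt lb[of r] by (auto simp: s_def)
            ultimately show ?thesis by simp
          next
            case eq
            have "(\<Sum>k\<le>s. of_nat (s choose k) *
              (if Poly_Mapping.single (2*r) k + Poly_Mapping.single (2*r+1) (s - k) = mu then 1 else 0))
              = (\<Sum>k\<le>s. if k = 0 then (if Poly_Mapping.single (2*r+1) J = mu then 1 else 0) else (0::'k))"
            proof (rule sum.cong[OF refl])
              fix k assume k: "k \<in> {..s}"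
              show "of_nat (s choose k) *
                (if Poly_Mapping.single (2*r) k + Poly_Mapping.single (2*r+1) (s - k) = mu then 1 else 0)
                = (if k = 0 then (if Poly_Mapping.single (2*r+1) J = mu then 1 else 0) else (0::'k))"
                using keyeq[of k] eq k by auto
            qed
            also have "\<dots> = (if Poly_Mapping.single (2*r+1) J = mu then 1 else 0)" by simp
            finally have d1: "(delta_coeff p m a' mu :: 'k) = (if Poly_Mapping.single (2*r+1) J = mu then 1 else 0)"
              using dsum by simp
            have ceq: "Poly_Mapping.single (2*r+1) J = mu \<longleftrightarrow> c = 0"
            proof
              assume e: "Poly_Mapping.single (2*r+1) J = mu"
              show "c = 0"
              proof (rule poly_mapping_eqI)
                fix k
                show "Poly_Mapping.lookup c k = Poly_Mapping.lookup 0 k"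
                proof (cases "k < m")
                  case True
                  then have "Poly_Mapping.lookup c k = Poly_Mapping.lookup mu (2*k)"
                    by (simp add: mu_def lookup_tm_even)
                  also have "\<dots> = 0" unfolding e[symmetric] by (simp add: lookup_single when_def)
                  finally show ?thesis by simp
                next
                  case False
                  then show ?thesis using c unfolding std_mono_def by auto
                qed
              qed
            next
              assume c0: "c = 0"
              show "Poly_Mapping.single (2*r+1) J = mu"
              proof (rule poly_mapping_eqI)
                fix x show "Poly_Mapping.lookup (Poly_Mapping.single (2*r+1) J) x = Poly_Mapping.lookup mu x"
                proof (cases x rule: even_odd_cases)
                  case (1 k) then show ?thesis by (simp add: mu_def lookup_tm_even c0 lookup_single when_def)
                next
                  case (2 k) then show ?thesis using r lookup_tm_odd[of m c b k]
                    by (simp add: mu_def lb lookup_single when_def)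
                qed
              qed
            qed
            have "a' = b" using eq a's by (simp add: b_def)
            then show ?thesis using d1 ceq by simp
          qed
        qed
      qed
    qed
    also have "\<dots> = (if c = 0 then cM v b else 0)" using stdb by (simp add: finite_std)
    finally show ?thesis by (simp add: b_def)
  qed
qed



theorem mainTheorem10:
  fixes scale :: "'k::field \<Rightarrow> 'm::ab_group_add \<Rightarrow> 'm"
    and p n m i :: nat
    and cM :: "'m \<Rightarrow> (nat \<Rightarrow>\<^sub>0 nat) \<Rightarrow> 'm"
    and v :: 'm
  assumes "prime p" and "CHAR('k) = p"
    and "n \<ge> 1" and "m \<ge> 1"
    and "vector_space scale"
    and "\<exists>B. finite_dimensional_vector_space scale B"
    and "is_comodule scale p n m cM"
    and "1 \<le> i" and "i \<le> m"
    and "v \<noteq> 0" and "invariant_G p n m cM (i - 1) v"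
  shows "in_tensor_R_sub m (cM v) i \<and>
    (let j = Max {j. cM v (Poly_Mapping.single (m - i) j) \<noteq> 0};
         w = cM v (Poly_Mapping.single (m - i) j)
     in w \<noteq> 0 \<and> invariant_G p n m cM i w)"
proof -
  note prm = assms(1) and vs = assms(5) and comod = assms(7) and i1 = assms(8) and im = assms(9)
    and v0 = assms(10) and invv = assms(11)
  have p: "p > 0" using prm by (simp add: prime_gt_0_nat)
  have C0: "\<And>u a. \<not> std_mono m (p ^ n) a \<Longrightarrow> cM u a = 0" using comod unfolding is_comodule_def by blast
  have Cc: "\<And>u. cM u 0 = u" using comod unfolding is_comodule_def by blast
  have invG: "\<And>b. std_mono m (p ^ n) b \<Longrightarrow> (\<forall>k < m - (i - 1). Poly_Mapping.lookup b k = 0) \<Longrightarrow>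
      cM v b = (if b = 0 then v else 0)"
    using invv unfolding invariant_G_def by blast
  have P1: "\<forall>a. std_mono m (p^n) a \<longrightarrow> (\<exists>k\<ge>m - d. Poly_Mapping.lookup a k \<noteq> 0) \<longrightarrow> cM v a = 0"
    if "m - i < m - d" for d
    using that
  proof (induct d)
    case 0
    show ?case unfolding std_mono_def by (auto dest: leD)
  next
    case (Suc d)
    define j where "j = m - Suc d"
    have jm: "j < m" and jd: "Suc j = m - d" and ij: "m - i < j" using Suc.prems by (auto simp: j_def)
    have IH: "\<forall>a. std_mono m (p^n) a \<longrightarrow> (\<exists>k\<ge>m - d. Poly_Mapping.lookup a k \<noteq> 0) \<longrightarrow> cM v a = 0"
      using Suc by simp
    show ?case
    proof (intro allI impI)
      fix a assume a: "std_mono m (p^n) a" and ex: "\<exists>k\<ge>m - Suc d. Poly_Mapping.lookup a k \<noteq> 0"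
      show "cM v a = 0"
      proof (cases "\<exists>k>j. Poly_Mapping.lookup a k \<noteq> 0")
        case True
        then have "\<exists>k\<ge>m - d. Poly_Mapping.lookup a k \<noteq> 0" using jd by (metis Suc_le_eq)
        then show ?thesis using IH a by blast
      next
        case False
        then have atop: "\<forall>k>j. Poly_Mapping.lookup a k = 0" by auto
        have aj: "Poly_Mapping.lookup a j \<noteq> 0" using ex atop unfolding j_def[symmetric]
          by (metis le_neq_implies_less)
        have H: "\<forall>a'. std_mono m (p^n) a' \<longrightarrow> (\<exists>k>j. Poly_Mapping.lookup a' k \<noteq> 0) \<longrightarrow> cM v a' = 0"
          using IH jd by (metis Suc_le_eq)
        have inv: "\<forall>b. std_mono m (p^n) b \<longrightarrow> (\<forall>k<j. Poly_Mapping.lookup b k = 0) \<longrightarrow> b \<noteq> 0 \<longrightarrow> cM v b = 0"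
        proof (intro allI impI)
          fix b assume b: "std_mono m (p^n) b" and bl: "\<forall>k<j. Poly_Mapping.lookup b k = 0" and b0: "b \<noteq> 0"
          have "\<forall>k < m - (i - 1). Poly_Mapping.lookup b k = 0" using bl ij i1 im by auto
          then show "cM v b = 0" using invG[OF b] b0 by simp
        qed
        show ?thesis by (rule kill_step[OF comod vs p jm a aj atop H inv])
      qed
    qed
  qed
  define r where "r = m - i"
  have rm: "r < m" using i1 im by (simp add: r_def)
  have H1: "\<forall>a'. std_mono m (p^n) a' \<longrightarrow> (\<exists>k>r. Poly_Mapping.lookup a' k \<noteq> 0) \<longrightarrow> cM v a' = 0"
  proof (intro allI impI)
    fix a' assume a': "std_mono m (p^n) a'" and ex: "\<exists>k>r. Poly_Mapping.lookup a' k \<noteq> 0"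
    have lt: "m - i < m - (i - 1)" using i1 im by simp
    from ex obtain k where k: "r < k" "Poly_Mapping.lookup a' k \<noteq> 0" by blast
    have "m - (i - 1) \<le> k" using k i1 im by (simp add: r_def)
    then have "\<exists>k\<ge>m - (i - 1). Poly_Mapping.lookup a' k \<noteq> 0" using k by blast
    then show "cM v a' = 0" using P1[OF lt] a' by blast
  qed
  have part1: "in_tensor_R_sub m (cM v) i"
    unfolding in_tensor_R_sub_def
  proof (intro allI impI)
    fix a :: "nat \<Rightarrow>\<^sub>0 nat" assume ex: "\<exists>j. m - i < j \<and> Poly_Mapping.lookup a j \<noteq> 0"
    show "cM v a = 0"
    proof (cases "std_mono m (p^n) a")
      case True then show ?thesis using H1 ex by (auto simp: r_def)
    next
      case False then show ?thesis by (rule C0)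
    qed
  qed
  define Jset where "Jset = {j. cM v (Poly_Mapping.single r j) \<noteq> 0}"
  have fin: "finite Jset"
  proof (rule finite_subset[of _ "{..<p^n}"])
    show "Jset \<subseteq> {..<p^n}"
    proof
      fix j assume "j \<in> Jset"
      then have "std_mono m (p^n) (Poly_Mapping.single r j)" using C0 by (auto simp: Jset_def)
      then have "Poly_Mapping.lookup (Poly_Mapping.single r j) r < p^n" unfolding std_mono_def by blast
      then show "j \<in> {..<p^n}" by simp
    qed
  qed simp
  have "0 \<in> Jset" using v0 Cc by (simp add: Jset_def)
  then have Jin: "Max Jset \<in> Jset" using fin by (intro Max_in) auto
  define J where "J = Max Jset"
  have maxJ: "\<forall>s>J. cM v (Poly_Mapping.single r s) = 0"
  proof (intro allI impI)
    fix s assume Js: "J < s"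
    have "s \<notin> Jset"
    proof
      assume "s \<in> Jset"
      then have "s \<le> Max Jset" by (rule Max_ge[OF fin])
      with Js show False by (simp add: J_def)
    qed
    then show "cM v (Poly_Mapping.single r s) = 0" by (simp add: Jset_def)
  qed
  have w0: "cM v (Poly_Mapping.single r J) \<noteq> 0" using Jin by (simp add: J_def Jset_def)
  have invw: "invariant_G p n m cM i (cM v (Poly_Mapping.single r J))"
    unfolding invariant_G_def
  proof (intro allI impI)
    fix c assume c: "std_mono m (p^n) c" and cl: "\<forall>j<m - i. Poly_Mapping.lookup c j = 0"
    show "cM (cM v (Poly_Mapping.single r J)) c = (if c = 0 then cM v (Poly_Mapping.single r J) else 0)"
      by (rule top_step[OF comod vs p rm H1 maxJ c]) (use cl in \<open>simp add: r_def\<close>)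
  qed
  show ?thesis using part1 w0 invw
    by (simp add: Let_def J_def Jset_def r_def)
qed


end
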